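(* For each $k\in\{1,\dots,n-1\}$, the map $\psi_k:\wedge^kH_1\to V^{\otimes n}$ has image exactly $H_k$ and is an isomorphism of $\mathbb{C}(q)$-vector spaces $\wedge^kH_1\cong H_k$. Moreover \[\{\psi_k(e_{i_1}\wedge e_{i_2}\wedge\cdots\wedge e_{i_k}) : 1\le i_1<i_2<\cdots<i_k\le n-1\}=\phi(\mathcal{S}_k).\]
   Context: Let $U=U_q(\mathfrak{gl}(1|1))$ be the unital superalgebra over $\mathbb{C}(q)$ generated by odd elements $E,F$ and even elements $\mathbf q^h$ ($h\in P^*=\mathbb{Z}h_1\oplus\mathbb{Z}h_2$) with relations $\mathbf q^0=1$, $\mathbf q^h\mathbf q^{h'}=\mathbf q^{h+h'}$, $\mathbf q^hE=q^{\langle h,\alpha\rangle}E\mathbf q^h$, $\mathbf q^hF=q^{-\langle h,\alpha\rangle}F\mathbf q^h$, $EF+FE=\frac{K-K^{-1}}{q-q^{-1}}$ with $K=\mathbf q^{h_1+h_2}$, $E^2=F^2=0$; here $P=\mathbb{Z}\epsilon_1\oplus\mathbb{Z}\epsilon_2$ with $\{\epsilon_1,\epsilon_2\}$ dual to $\{h_1,h_2\}$ and $\alpha=\epsilon_1-\epsilon_2$. Comultiplication: $\Delta(E)=E\otimes K^{-1}+1\otimes E$, $\Delta(F)=F\otimes1+K\otimes F$, $\Delta(\mathbf q^h)=\mathbf q^h\otimes\mathbf q^h$; on tensor products one uses the Koszul sign rule $(X\otimes Y)(a\otimes b)=(-1)^{|Y||a|}Xa\otimes Yb$. $V$ has basis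 $v_0$ (even), $v_1$ (odd) with $Ev_0=0,Ev_1=v_0,Fv_0=v_1,Fv_1=0$, $\mathbf q^hv_0=q^{\langle h,\epsilon_1\rangle}v_0$, $\mathbf q^hv_1=q^{\langle h,\epsilon_2\rangle}v_1$. Fix $n\ge2$; $U$ acts on $V^{\otimes m}$ via iterated comultiplication. For $0\le k\le n-1$, $H_k=\{v\in V^{\otimes n}: Ev=0,\ \mathbf q^hv=q^{\langle h,(n-k)\epsilon_1+k\epsilon_2\rangle}v\ \forall h\in P^*\}$. For $1\le i\le n-1$, $e_i=v_0^{\otimes(i-1)}\otimes(q^{-1}v_0\otimes v_1-v_1\otimes v_0)\otimes v_0^{\otimes(n-1-i)}$; these form a basis of $H_1$. For $1\le i\le n$ let $w_i=v_0^{\otimes(i-1)}\otimes v_1\otimes v_0^{\otimes(n-i)}$ and $U'=\mathrm{span}\{w_i\}$; note $e_i=-w_i+q^{-1}w_{i+1}$, so $H_1\subset U'$. Let $\psi:\wedge^*U'\to V^{\otimes n}$ be the $\mathbb{C}(q)$-linear map with $\psi(w_{i_1}\wedge\cdots\wedge w_{i_k})=v_{\alpha_1}\otimes\cdots\otimes v_{\alpha_n}$ for $i_1<\cdots<i_k$, where $\alpha_j=1$ if $j\in\{i_1,\dots,i_k\}$ and $\alpha_j=0$ otherwise; $\psi_k$ is the restriction of $\psi$ to $\wedge^kH_1$. $\mathcal{S}_k$ is the set of strings $s=(a_1,b_1,a_2,b_2,\dots,b_l,a_{l+1})$ ($l\ge0$) of nonnegative integers with all $b_i\ge2$, $\sum_{i=1}^l(b_i-1)=k$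 and $\sum_{i=1}^{l+1}a_i+\sum_{i=1}^lb_i=n$; and $\phi(s)=v_0^{\otimes a_1}\otimes E(v_1^{\otimes b_1})\otimes v_0^{\otimes a_2}\otimes\cdots\otimes E(v_1^{\otimes b_l})\otimes v_0^{\otimes a_{l+1}}\in V^{\otimes n}$, where $E(v_1^{\otimes b})$ is computed in $V^{\otimes b}$ and factors $v_0^{\otimes 0}$ are omitted. *)

theory Defs
  imports Main "HOL-Library.Function_Algebras" "HOL-Computational_Algebra.Polynomial"
    "HOL-Computational_Algebra.Fraction_Field" "HOL-Combinatorics.Permutations"
begin

type_synonym K = "complex poly fract"

definition q :: K where "q = Fract [:0, 1:] 1"

text \<open>A basis vector
  v_{alpha_1} tensor ... tensor v_{alpha_n} is indexed by the set S = {j. alpha_j = 1}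
  of positions (1-based) carrying v_1.\<close>
type_synonym tvec = "nat set \<Rightarrow> K"

definition scl :: "K \<Rightarrow> ('a \<Rightarrow> K) \<Rightarrow> ('a \<Rightarrow> K)" where
  "scl c v = (\<lambda>x. c * v x)"

abbreviation kspan :: "('a \<Rightarrow> K) set \<Rightarrow> ('a \<Rightarrow> K) set" where
  "kspan \<equiv> module.span scl"

abbreviation kdependent :: "('a \<Rightarrow> K) set \<Rightarrow> bool" where
  "kdependent \<equiv> module.dependent scl"

definition Vn :: "nat \<Rightarrow> tvec set" where
  "Vn n = {v. \<forall>S. v S \<noteq> 0 \<longrightarrow> S \<subseteq> {1..n}}"

definition bv :: "nat set \<Rightarrow> tvec" where
  "bv S = (\<lambda>T. if T = S then 1 else 0)"

text \<open>Action of E on V^{tensor n} via the iterated coproduct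
  sum_j 1^{(j-1)} tensor E tensor (K^{-1})^{(n-j)} with Koszul signs; K acts by q on V.\<close>
definition E_op :: "nat \<Rightarrow> tvec \<Rightarrow> tvec" where
  "E_op n v = (\<lambda>T. \<Sum>j\<in>{1..n} - T.
      (-1) ^ card {i\<in>T. i < j} * inverse q ^ (n - j) * v (insert j T))"

text \<open>Action of q^h, h = a h_1 + b h_2, on V^{tensor n}.\<close>
definition Kh :: "nat \<Rightarrow> int \<Rightarrow> int \<Rightarrow> tvec \<Rightarrow> tvec" where
  "Kh n a b v = (\<lambda>T. q powi (a * (int n - int (card T)) + b * int (card T)) * v T)"

definition H :: "nat \<Rightarrow> nat \<Rightarrow> tvec set" where
  "H n k = {v \<in> Vn n. E_op n v = 0 \<and>
      (\<forall>a b. Kh n a b v = scl (q powi (a * (int n - int k) + b * int k)) v)}"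

definition w :: "nat \<Rightarrow> tvec" where
  "w i = bv {i}"

definition e :: "nat \<Rightarrow> tvec" where
  "e i = (\<lambda>T. - w i T + inverse q * w (i + 1) T)"

text \<open>Exterior powers of U' = span{w_i}: an element of the k-th exterior power is given by its
  coordinates in the basis w_{i_1} wedge ... wedge w_{i_k} (i_1 < ... < i_k), indexed by the
  strictly increasing list [i_1,...,i_k].  The wedge of u_1,...,u_k (elements of U',
  coordinate of u at w_j being u {j}) has coordinates given by the k x k minors.\<close>
definition wedge :: "tvec list \<Rightarrow> (nat list \<Rightarrow> K)" where
  "wedge us = (\<lambda>J. if sorted_wrt (<) J \<and> length J = length us then
      (\<Sum>p\<in>{p. p permutes {..<length us}}.
          of_int (sign p) * (\<Prod>a<length us. (us ! a) {J ! p a}))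
    else 0)"

definition ext_pow :: "nat \<Rightarrow> tvec set \<Rightarrow> (nat list \<Rightarrow> K) set" where
  "ext_pow k W = kspan {wedge us | us. length us = k \<and> set us \<subseteq> W}"

definition psi :: "(nat list \<Rightarrow> K) \<Rightarrow> tvec" where
  "psi x = (\<lambda>T. if finite T then x (sorted_list_of_set T) else 0)"

definition tensor :: "nat \<Rightarrow> tvec \<Rightarrow> tvec \<Rightarrow> tvec" where
  "tensor m x y = (\<lambda>S. x {i\<in>S. i \<le> m} * y ((\<lambda>i. i - m) ` {i\<in>S. m < i}))"

text \<open>Strings s = (a_1,b_1,...,b_l,a_{l+1}) are lists of odd length; the b's sit at odd
  (0-based) indices.\<close>
definition S_str :: "nat \<Rightarrow> nat \<Rightarrow> nat list set" where
  "S_str n k = {s. odd (length s) \<and> (\<forall>i<length s. odd i \<longrightarrow> s ! i \<ge> 2)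
      \<and> (\<Sum>i\<in>{i. i < length s \<and> odd i}. s ! i - 1) = k \<and> sum_list s = n}"

fun phi_aux :: "bool \<Rightarrow> nat list \<Rightarrow> tvec" where
  "phi_aux _ [] = bv {}"
| "phi_aux True (a # r) = tensor a (bv {}) (phi_aux False r)"
| "phi_aux False (b # r) = tensor b (E_op b (bv {1..b})) (phi_aux True r)"

definition phi :: "nat list \<Rightarrow> tvec" where
  "phi s = phi_aux True s"

end

theory Submission
  imports Defs "Jordan_Normal_Form.Determinant" "Jordan_Normal_Form.Column_Operations"
begin

interpretation M: Modules.module "scl :: K \<Rightarrow> ('a \<Rightarrow> K) \<Rightarrow> ('a \<Rightarrow> K)"
  by unfold_locales (auto simp: scl_def fun_eq_iff algebra_simps)

lemma q_ne0[simp]: "q \<noteq> 0"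
  by (simp add: q_def Zero_fract_def eq_fract)

lemma q_pow_ne1: "q ^ m = 1 \<Longrightarrow> m = 0"
proof -
  assume h: "q ^ m = 1"
  have "q ^ j = Fract ([:0,1:] ^ j) (1::complex poly)" for j
    by (induction j) (simp_all add: q_def One_fract_def)
  hence "q ^ m = Fract ([:0,1:] ^ m) (1::complex poly)" by blast
  hence "Fract ([:0,1:] ^ m) (1::complex poly) = Fract 1 1" using h by (metis One_fract_def)
  hence "([:0,1:] ^ m :: complex poly) = 1" by (simp add: eq_fract)
  hence "degree ([:0,1:] ^ m :: complex poly) = 0" by simp
  thus "m = 0" by (simp add: degree_power_eq)
qed

lemma q_powi_inj: "q powi x = q powi y \<Longrightarrow> x = y"
proof -
  have main: "q powi x = q powi y \<Longrightarrow> x \<le> y \<Longrightarrow> x = y" for x y :: int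
  proof -
    assume h: "q powi x = q powi y" and le: "x \<le> y"
    have "q powi y = q powi x * q powi (y - x)"
      by (simp add: power_int_add[symmetric])
    also have "q powi (y - x) = q ^ nat (y - x)"
      using le by (simp add: power_int_def)
    finally have "q ^ nat (y - x) = 1" using h by (simp add: power_int_eq_0_iff)
    from q_pow_ne1[OF this] show ?thesis using le by simp
  qed
  assume "q powi x = q powi y"
  thus "x = y" using main[of x y] main[of y x] by (cases "x \<le> y") auto
qed


lemma E_op_add: "E_op n (u + v) = E_op n u + E_op n v"
  by (simp add: E_op_def fun_eq_iff algebra_simps sum.distrib)

lemma E_op_scl: "E_op n (scl c v) = scl c (E_op n v)"
  by (simp add: E_op_def scl_def fun_eq_iff algebra_simps sum_distrib_left)

lemma E_op_zero: "E_op n 0 = 0"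
  by (simp add: E_op_def fun_eq_iff)

lemma H_iff: "v \<in> H n k \<longleftrightarrow> v \<in> Vn n \<and> E_op n v = 0 \<and> (\<forall>T. v T \<noteq> 0 \<longrightarrow> card T = k)"
proof
  assume v: "v \<in> H n k"
  have "card T = k" if "v T \<noteq> 0" for T
  proof -
    from v have "Kh n 1 0 v T = scl (q powi (1 * (int n - int k) + 0 * int k)) v T"
      unfolding H_def by auto
    hence "q powi (int n - int (card T)) = q powi (int n - int k)"
      using that by (simp add: Kh_def scl_def)
    from q_powi_inj[OF this] show ?thesis by simp
  qed
  thus "v \<in> Vn n \<and> E_op n v = 0 \<and> (\<forall>T. v T \<noteq> 0 \<longrightarrow> card T = k)"
    using v unfolding H_def by auto
next
  assume v: "v \<in> Vn n \<and> E_op n v = 0 \<and> (\<forall>T. v T \<noteq> 0 \<longrightarrow> card T = k)"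
  have "Kh n a b v = scl (q powi (a * (int n - int k) + b * int k)) v" for a b
    unfolding Kh_def scl_def fun_eq_iff
  proof
    fix T
    show "q powi (a * (int n - int (card T)) + b * int (card T)) * v T =
        q powi (a * (int n - int k) + b * int k) * v T"
      using v by (cases "v T = 0") auto
  qed
  thus "v \<in> H n k" using v unfolding H_def by auto
qed

lemma scl_zero: "scl c 0 = 0"
  by (simp add: scl_def fun_eq_iff)

lemma sum_fun_app: "(sum f A) x = (\<Sum>a\<in>A. f a x)"
  by (induction A rule: infinite_finite_induct) auto

lemma H_zero: "0 \<in> H n k"
  by (simp add: H_iff Vn_def E_op_zero)

lemma H_add: "u \<in> H n k \<Longrightarrow> v \<in> H n k \<Longrightarrow> u + v \<in> H n k"
proof -
  assume u: "u \<in> H n k" and v: "v \<in> H n k"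
  have "E_op n (u + v) = 0" using u v by (simp add: H_iff E_op_add)
  moreover have "(u + v) \<in> Vn n" unfolding Vn_def
  proof (intro allI impI CollectI)
    fix S assume "(u + v) S \<noteq> 0"
    hence "u S \<noteq> 0 \<or> v S \<noteq> 0" by auto
    thus "S \<subseteq> {1..n}" using u v unfolding H_iff Vn_def by blast
  qed
  moreover have "\<forall>T. (u + v) T \<noteq> 0 \<longrightarrow> card T = k"
  proof (intro allI impI)
    fix S assume "(u + v) S \<noteq> 0"
    hence "u S \<noteq> 0 \<or> v S \<noteq> 0" by auto
    thus "card S = k" using u v unfolding H_iff by blast
  qed
  ultimately show ?thesis by (simp add: H_iff)
qed

lemma H_scl: "v \<in> H n k \<Longrightarrow> scl c v \<in> H n k"
proof -
  assume v: "v \<in> H n k"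
  have "E_op n v = 0" using v by (simp add: H_iff)
  hence "E_op n (scl c v) = 0" by (simp add: E_op_scl scl_zero)
  moreover have "scl c v \<in> Vn n" using v unfolding H_iff Vn_def scl_def by auto
  moreover have "\<forall>T. scl c v T \<noteq> 0 \<longrightarrow> card T = k" using v unfolding H_iff scl_def by auto
  ultimately show ?thesis by (simp add: H_iff)
qed

lemma H_diff: "u \<in> H n k \<Longrightarrow> v \<in> H n k \<Longrightarrow> u - v \<in> H n k"
proof -
  assume "u \<in> H n k" "v \<in> H n k"
  hence "u + scl (-1) v \<in> H n k" by (intro H_add H_scl)
  moreover have "u + scl (-1) v = u - v" by (simp add: scl_def fun_eq_iff)
  ultimately show ?thesis by simp
qed

lemma psi_add: "psi (x + y) = psi x + psi y"
  by (simp add: psi_def fun_eq_iff)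

lemma psi_scl: "psi (scl c x) = scl c (psi x)"
  by (simp add: psi_def scl_def fun_eq_iff)

lemma psi_zero: "psi 0 = 0"
  by (simp add: psi_def fun_eq_iff)

lemma psi_sum: "psi (sum f A) = (\<Sum>a\<in>A. psi (f a))"
  by (simp add: psi_def fun_eq_iff sum_fun_app)

lemma perm_mono_id:
  fixes p :: "nat \<Rightarrow> nat" and k :: nat
  assumes p: "p permutes {..<k}" and mono: "\<And>a a'. a < a' \<Longrightarrow> a' < k \<Longrightarrow> p a < p a'"
  shows "p = id"
proof -
  have ge: "a < k \<Longrightarrow> a \<le> p a" for a
  proof (induction a)
    case (Suc a)
    then show ?case using mono[of a "Suc a"] by simp
  qed simp
  have inr: "a < k \<Longrightarrow> p a < k" for a using permutes_in_image[OF p, of a] by simp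
  have le: "d < k \<Longrightarrow> p (k - 1 - d) \<le> k - 1 - d" for d
  proof (induction d)
    case 0
    then show ?case using inr[of "k - 1"] by simp
  next
    case (Suc d)
    then have "p (k - 1 - Suc d) < p (k - 1 - d)" using mono[of "k - 1 - Suc d" "k - 1 - d"] by simp
    then show ?case using Suc by simp
  qed
  show ?thesis
  proof
    fix a
    show "p a = id a"
    proof (cases "a < k")
      case True
      have "p a \<le> a" using le[of "k - 1 - a"] True by simp
      then show ?thesis using ge[OF True] by simp
    next
      case False
      then show ?thesis using permutes_not_in[OF p] by simp
    qed
  qed
qed

lemma perm_diag:
  fixes p :: "nat \<Rightarrow> nat" and k :: nat and "is" J :: "nat list"
  assumes p: "p permutes {..<k}" and s1: "sorted_wrt (<) is" and s2: "sorted_wrt (<) J"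
    and l1: "length is = k" and l2: "length J = k"
    and b: "\<And>a. a < k \<Longrightarrow> is!a \<le> J!(p a) \<and> J!(p a) \<le> is!a + 1"
  shows "p = id"
proof (rule perm_mono_id[OF p])
  fix a a' assume aa: "a < a'" "a' < k"
  have inr: "x < k \<Longrightarrow> p x < k" for x using permutes_in_image[OF p, of x] by simp
  have "is!a < is!a'" using sorted_wrt_nth_less[OF s1 aa(1)] aa l1 by simp
  hence "is!a + 1 \<le> is!a'" by simp
  hence "J!(p a) \<le> J!(p a')" using b[of a] b[of a'] aa by (meson le_trans less_trans)
  moreover have "p a \<noteq> p a'" using permutes_inj[OF p] aa unfolding inj_def by auto
  moreover have "p a' < p a \<Longrightarrow> J!(p a') < J!(p a)"
    using sorted_wrt_nth_less[OF s2] inr aa l2 by simp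
  ultimately show "p a < p a'" by (meson leD linorder_neqE_nat)
qed

lemma wedge_diag:
  fixes "is" J :: "nat list"
  assumes s1: "sorted_wrt (<) is" and s2: "sorted_wrt (<) J"
    and l1: "length is = length us" and l2: "length J = length us"
    and b: "\<And>a b. a < length us \<Longrightarrow> b < length us \<Longrightarrow> (us!a) {J!b} \<noteq> 0 \<Longrightarrow> is!a \<le> J!b \<and> J!b \<le> is!a + 1"
  shows "wedge us J = (\<Prod>a<length us. (us!a) {J!a})"
proof -
  let ?k = "length us"
  let ?P = "{p. p permutes {..<?k}}"
  let ?f = "\<lambda>p. of_int (sign p) * (\<Prod>a<?k. (us ! a) {J ! p a}) :: K"
  have fin: "finite ?P" by (simp add: finite_permutations)
  have idP: "id \<in> ?P" by (simp add: permutes_id)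
  have z: "?f p = 0" if "p \<in> ?P - {id}" for p
  proof (rule ccontr)
    assume "?f p \<noteq> 0"
    hence nz: "\<And>a. a < ?k \<Longrightarrow> (us ! a) {J ! p a} \<noteq> 0" by auto
    have pp: "p permutes {..<?k}" using that by simp
    have "p = id"
    proof (rule perm_diag[OF pp s1 s2 l1 l2])
      fix a assume a: "a < ?k"
      have "p a < ?k" using permutes_in_image[OF pp, of a] a by simp
      then show "is!a \<le> J!(p a) \<and> J!(p a) \<le> is!a + 1" using b[OF a _ nz[OF a]] by simp
    qed
    thus False using that by simp
  qed
  have "wedge us J = sum ?f ?P" by (simp add: wedge_def s2 l2)
  also have "\<dots> = ?f id + sum ?f (?P - {id})" by (rule sum.remove[OF fin idP])
  also have "sum ?f (?P - {id}) = 0" using z by (intro sum.neutral) auto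
  finally show ?thesis by (simp add: sign_id)
qed




section \<open>Support of wedges and injectivity of psi\<close>

lemma wedge_nz: "wedge us J \<noteq> 0 \<Longrightarrow> sorted_wrt (<) J \<and> length J = length us"
  by (simp add: wedge_def split: if_splits)

lemma ext_pow_supp:
  assumes x: "x \<in> ext_pow k W" and nz: "x J \<noteq> 0"
  shows "sorted_wrt (<) J \<and> length J = k"
proof (rule ccontr)
  assume J: "\<not> (sorted_wrt (<) J \<and> length J = k)"
  from x have "x J = 0" unfolding ext_pow_def
  proof (induction rule: M.span_induct_alt)
    case base show ?case by simp
  next
    case (step c x y) then show ?case using J wedge_nz[of _ J] by (auto simp: scl_def)
  qed
  with nz show False by simp
qed

lemma sorted_list_of_set_strict: "sorted_wrt (<) J \<Longrightarrow> sorted_list_of_set (set J) = J"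
  by (simp add: sorted_list_of_set_sort_remdups strict_sorted_iff distinct_remdups_id sorted_sort_id)

lemma psi_inj: "inj_on psi (ext_pow k W)"
proof (rule inj_onI)
  fix x y assume x: "x \<in> ext_pow k W" and y: "y \<in> ext_pow k W" and eq: "psi x = psi y"
  show "x = y"
  proof
    fix J
    show "x J = y J"
    proof (cases "sorted_wrt (<) J")
      case True
      have "psi x (set J) = psi y (set J)" using eq by simp
      then show ?thesis using True by (simp add: psi_def sorted_list_of_set_strict)
    next
      case False
      have "x J = 0" using ext_pow_supp[OF x, of J] False by blast
      moreover have "y J = 0" using ext_pow_supp[OF y, of J] False by blast
      ultimately show ?thesis by simp
    qed
  qed
qed

section \<open>Wedges as determinants\<close>

definition Mt :: "tvec list \<Rightarrow> nat list \<Rightarrow> K mat" where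
  "Mt us X = mat (length us) (length us) (\<lambda>(a,b). (us!a) {X!b})"

lemma Mt_carrier: "Mt us X \<in> carrier_mat (length us) (length us)"
  by (simp add: Mt_def)

lemma det_Mt: "det (Mt us J) = (\<Sum>p\<in>{p. p permutes {..<length us}}.
      of_int (sign p) * (\<Prod>a<length us. (us ! a) {J ! p a}))"
proof -
  let ?k = "length us"
  have "det (Mt us J) = (\<Sum>p\<in>{p. p permutes {0..<?k}}. signof p * (\<Prod>i = 0..<?k. Mt us J $$ (i, p i)))"
    by (rule det_def'[OF Mt_carrier])
  also have "\<dots> = (\<Sum>p\<in>{p. p permutes {..<?k}}. of_int (sign p) * (\<Prod>a<?k. (us ! a) {J ! p a}))"
  proof (rule sum.cong)
    show "{p. p permutes {0..<?k}} = {p. p permutes {..<?k}}" by (simp add: atLeast0LessThan)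
  next
    fix p assume "p \<in> {p. p permutes {..<?k}}"
    hence p: "p permutes {..<?k}" by simp
    have "(\<Prod>i = 0..<?k. Mt us J $$ (i, p i)) = (\<Prod>a<?k. (us ! a) {J ! p a})"
      unfolding atLeast0LessThan
    proof (rule prod.cong)
      fix i assume "i \<in> {..<?k}"
      moreover hence "p i < ?k" using permutes_in_image[OF p] by simp
      ultimately show "Mt us J $$ (i, p i) = (us ! i) {J ! p i}" by (simp add: Mt_def)
    qed simp
    then show "signof p * (\<Prod>i = 0..<?k. Mt us J $$ (i, p i)) =
        of_int (sign p) * (\<Prod>a<?k. (us ! a) {J ! p a})" by simp
  qed
  finally show ?thesis .
qed

lemma wedge_det: "sorted_wrt (<) J \<Longrightarrow> length J = length us \<Longrightarrow> wedge us J = det (Mt us J)"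
  by (simp add: wedge_def det_Mt)

lemma insort_split:
  fixes ts :: "nat list"
  shows "sorted ts \<Longrightarrow> insort j ts = take (length (filter (\<lambda>x. x < j) ts)) ts @ j # drop (length (filter (\<lambda>x. x < j) ts)) ts"
proof (induction ts)
  case (Cons x xs)
  show ?case
  proof (cases "j \<le> x")
    case True
    have "filter (\<lambda>y. y < j) (x # xs) = []" using Cons.prems True by (auto simp: filter_empty_conv)
    then show ?thesis using True by simp
  next
    case False
    then show ?thesis using Cons by simp
  qed
qed simp

lemma sorted_insert_nth:
  fixes T :: "nat set"
  assumes T: "finite T" and j: "j \<notin> T"
  defines "m \<equiv> card {i\<in>T. i < j}"
  defines "L \<equiv> sorted_list_of_set (insert j T)" and "ts \<equiv> sorted_list_of_set T"
  shows "m \<le> card T" "L ! m = j" "b < m \<Longrightarrow> L ! b = ts ! b"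
    "m < b \<Longrightarrow> b \<le> card T \<Longrightarrow> L ! b = ts ! (b - 1)"
proof -
  have "length (filter (\<lambda>x. x < j) ts) = card ({x. x < j} \<inter> set ts)"
    by (rule distinct_length_filter) (simp add: ts_def)
  also have "{x. x < j} \<inter> set ts = {i\<in>T. i < j}" using T by (auto simp: ts_def)
  finally have mm: "length (filter (\<lambda>x. x < j) ts) = m" unfolding m_def .
  have "L = insort j (sorted_list_of_set (T - {j}))"
    unfolding L_def by (rule sorted_list_of_set_insert_remove[OF T])
  also have "T - {j} = T" using j by blast
  also have "insort j (sorted_list_of_set T) = take m ts @ j # drop m ts"
    using insort_split[of ts j] mm unfolding ts_def by simp
  finally have L: "L = take m ts @ j # drop m ts" .
  have lts: "length ts = card T" by (simp add: ts_def)
  show "m \<le> card T" unfolding m_def using T by (intro card_mono) auto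
  then have ml: "m \<le> length ts" using lts by simp
  show "L ! m = j" unfolding L using ml by (simp add: nth_append)
  show "b < m \<Longrightarrow> L ! b = ts ! b" unfolding L using ml by (simp add: nth_append)
  show "m < b \<Longrightarrow> b \<le> card T \<Longrightarrow> L ! b = ts ! (b - 1)"
  proof -
    assume b: "m < b" "b \<le> card T"
    have "L ! b = (j # drop m ts) ! (b - m)" unfolding L using ml b by (simp add: nth_append)
    also have "\<dots> = drop m ts ! (b - m - 1)" using b by (simp add: nth_Cons')
    also have "\<dots> = ts ! (b - 1)" using b ml by simp
    finally show ?thesis .
  qed
qed

lemma det_insert_swap:
  fixes T :: "nat set"
  assumes T: "finite T" and j: "j \<notin> T" and k: "length us = card T + 1"
  shows "det (Mt us (sorted_list_of_set (insert j T))) =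
    (-1) ^ card {i\<in>T. i < j} * det (Mt us (j # sorted_list_of_set T))"
proof -
  let ?m = "card {i\<in>T. i < j}"
  let ?L = "sorted_list_of_set (insert j T)"
  let ?ts = "sorted_list_of_set T"
  let ?k = "length us"
  note SI = sorted_insert_nth[OF T j]
  have mk: "?m < ?k" using SI(1) k by simp
  have "swap_col_to_front (Mt us ?L) ?m = Mt us (j # ?ts)"
  proof -
    have "swap_col_to_front (Mt us ?L) ?m = mat ?k ?k (\<lambda>(i,b). if b = 0 then Mt us ?L $$ (i,?m)
        else if b \<le> ?m then Mt us ?L $$ (i, b-1) else Mt us ?L $$ (i,b))"
      by (rule swap_col_to_front_result[OF Mt_carrier mk])
    also have "\<dots> = Mt us (j # ?ts)"
    proof (rule eq_matI)
      fix i b assume i: "i < dim_row (Mt us (j # ?ts))" and b: "b < dim_col (Mt us (j # ?ts))"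
      hence i': "i < ?k" and b': "b < ?k" by (auto simp: Mt_def)
      show "mat ?k ?k (\<lambda>(i,b). if b = 0 then Mt us ?L $$ (i,?m)
        else if b \<le> ?m then Mt us ?L $$ (i, b-1) else Mt us ?L $$ (i,b)) $$ (i, b) = Mt us (j # ?ts) $$ (i, b)"
      proof (cases "b = 0")
        case True
        then show ?thesis using i' b' mk SI(2) by (simp add: Mt_def)
      next
        case False
        show ?thesis
        proof (cases "b \<le> ?m")
          case True
          then have "?L ! (b - 1) = ?ts ! (b - 1)" using SI(3)[of "b-1"] False by simp
          then show ?thesis using i' b' False True by (simp add: Mt_def nth_Cons')
        next
          case F2: False
          then have "?L ! b = ?ts ! (b - 1)" using SI(4)[of b] b' k by simp
          then show ?thesis using i' b' False F2 by (simp add: Mt_def nth_Cons')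
        qed
      qed
    qed (auto simp: Mt_def)
    finally show ?thesis .
  qed
  hence "det (Mt us (j # ?ts)) = det (swap_col_to_front (Mt us ?L) ?m)" by simp
  also have "\<dots> = (-1) ^ ?m * det (Mt us ?L)" by (rule swap_col_to_front_det[OF Mt_carrier mk])
  finally have "det (Mt us (j # ?ts)) = (-1) ^ ?m * det (Mt us ?L)" .
  hence "(-1) ^ ?m * det (Mt us (j # ?ts)) = ((-1) ^ ?m * (-1) ^ ?m) * det (Mt us ?L)" by simp
  also have "(-1) ^ ?m * (-1) ^ ?m = (1::K)" by (simp add: power_mult_distrib[symmetric])
  finally show ?thesis by simp
qed

lemma det_repeat_zero:
  assumes j: "j \<in> set ts" and k: "length us = length ts + 1"
  shows "det (Mt us (j # ts)) = 0"
proof -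
  obtain c where c: "c < length ts" "ts ! c = j" using j by (auto simp: in_set_conv_nth)
  show ?thesis
  proof (rule det_identical_columns[OF Mt_carrier, of 0 "Suc c"])
    show "col (Mt us (j # ts)) 0 = col (Mt us (j # ts)) (Suc c)"
      using c k by (intro eq_vecI) (auto simp: Mt_def)
  qed (use c k in auto)
qed

lemma det_laplace0:
  assumes k: "length us = length ts + 1"
  shows "det (Mt us (j # ts)) = (\<Sum>a<length us. (us ! a) {j} * cofactor (Mt us (0 # ts)) a 0)"
proof -
  have "det (Mt us (j # ts)) = (\<Sum>a<length us. Mt us (j # ts) $$ (a, 0) * cofactor (Mt us (j # ts)) a 0)"
    by (rule laplace_expansion_column[OF Mt_carrier]) (use k in simp)
  also have "\<dots> = (\<Sum>a<length us. (us ! a) {j} * cofactor (Mt us (0 # ts)) a 0)"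
  proof (rule sum.cong[OF refl])
    fix a assume a: "a \<in> {..<length us}"
    have "mat_delete (Mt us (j # ts)) a 0 = mat_delete (Mt us (0 # ts)) a 0"
      by (rule eq_matI) (auto simp: mat_delete_def Mt_def)
    then show "Mt us (j # ts) $$ (a, 0) * cofactor (Mt us (j # ts)) a 0 =
        (us ! a) {j} * cofactor (Mt us (0 # ts)) a 0"
      using a k by (simp add: Mt_def cofactor_def)
  qed
  finally show ?thesis .
qed

lemma H1_sum: "u \<in> H n 1 \<Longrightarrow> (\<Sum>j\<in>{1..n}. inverse q ^ (n - j) * u {j}) = 0"
proof -
  assume "u \<in> H n 1"
  hence "E_op n u {} = 0" by (simp add: H_iff)
  thus ?thesis by (simp add: E_op_def)
qed

lemma E_wedge_zero:
  assumes us: "set us \<subseteq> H n 1"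
  shows "E_op n (psi (wedge us)) = 0"
proof
  fix T
  let ?k = "length us"
  let ?v = "psi (wedge us)"
  show "E_op n ?v T = 0 T"
  proof (cases "finite T \<and> card T + 1 = ?k")
    case False
    have "?v (insert j T) = 0" if "j \<notin> T" for j
    proof (cases "finite T")
      case True
      then have "length (sorted_list_of_set (insert j T)) \<noteq> ?k" using False that by simp
      then have "wedge us (sorted_list_of_set (insert j T)) = 0" using wedge_nz by blast
      then show ?thesis using True by (simp add: psi_def)
    next
      case False
      then show ?thesis by (simp add: psi_def)
    qed
    then show ?thesis by (simp add: E_op_def)
  next
    case True
    hence T: "finite T" and k: "?k = card T + 1" by auto
    let ?ts = "sorted_list_of_set T"
    have lts: "length us = length ?ts + 1" using k by simp
    have tm: "(-1) ^ card {i\<in>T. i < j} * inverse q ^ (n - j) * ?v (insert j T) =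
        inverse q ^ (n - j) * det (Mt us (j # ?ts))" if j: "j \<notin> T" for j
    proof -
      have "?v (insert j T) = wedge us (sorted_list_of_set (insert j T))"
        using T by (simp only: psi_def finite_insert if_True)
      also have "\<dots> = det (Mt us (sorted_list_of_set (insert j T)))"
        by (rule wedge_det[OF strict_sorted_list_of_set]) (use T j k in simp)
      also have "\<dots> = (-1) ^ card {i\<in>T. i < j} * det (Mt us (j # ?ts))"
        by (rule det_insert_swap[OF T j k])
      finally have "(-1) ^ card {i\<in>T. i < j} * ?v (insert j T) =
         ((-1) ^ card {i\<in>T. i < j} * (-1) ^ card {i\<in>T. i < j}) * det (Mt us (j # ?ts))"
        by simp
      also have "(-1) ^ card {i\<in>T. i < j} * (-1) ^ card {i\<in>T. i < j} = (1::K)"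
        by (simp add: power_mult_distrib[symmetric])
      finally show ?thesis by (simp add: algebra_simps)
    qed
    have "E_op n ?v T = (\<Sum>j\<in>{1..n} - T. inverse q ^ (n - j) * det (Mt us (j # ?ts)))"
      unfolding E_op_def by (rule sum.cong) (auto simp: tm)
    also have "\<dots> = (\<Sum>j\<in>{1..n}. inverse q ^ (n - j) * det (Mt us (j # ?ts)))"
    proof (rule sum.mono_neutral_left)
      show "\<forall>i\<in>{1..n} - ({1..n} - T). inverse q ^ (n - i) * det (Mt us (i # ?ts)) = 0"
        using det_repeat_zero[OF _ lts] T by auto
    qed auto
    also have "\<dots> = (\<Sum>j\<in>{1..n}. \<Sum>a<?k. inverse q ^ (n - j) * ((us ! a) {j} * cofactor (Mt us (0 # ?ts)) a 0))"
      by (simp add: det_laplace0[OF lts] sum_distrib_left)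
    also have "\<dots> = (\<Sum>a<?k. cofactor (Mt us (0 # ?ts)) a 0 * (\<Sum>j\<in>{1..n}. inverse q ^ (n - j) * (us ! a) {j}))"
      by (subst sum.swap) (simp add: sum_distrib_left algebra_simps)
    also have "\<dots> = 0"
    proof (rule sum.neutral, rule ballI)
      fix a assume "a \<in> {..<?k}"
      then have "us ! a \<in> H n 1" using us by auto
      from H1_sum[OF this]
      show "cofactor (Mt us (0 # ?ts)) a 0 * (\<Sum>j\<in>{1..n}. inverse q ^ (n - j) * (us ! a) {j}) = 0"
        by simp
    qed
    finally show ?thesis by simp
  qed
qed




lemma sum_single:
  assumes "finite A" "a \<in> A" "\<And>j. j \<in> A \<Longrightarrow> j \<noteq> a \<Longrightarrow> f j = 0"
  shows "sum f A = f a"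
proof -
  have "sum f A = f a + sum f (A - {a})" by (rule sum.remove[OF assms(1,2)])
  also have "sum f (A - {a}) = 0" using assms(3) by (intro sum.neutral) auto
  finally show ?thesis by simp
qed

lemma psi_wedge_H:
  assumes us: "set us \<subseteq> H n 1" and k: "length us = k"
  shows "psi (wedge us) \<in> H n k"
  unfolding H_iff
proof (intro conjI allI impI)
  show "E_op n (psi (wedge us)) = 0" by (rule E_wedge_zero[OF us])
next
  fix S assume nz: "psi (wedge us) S \<noteq> 0"
  hence fin: "finite S" and w: "wedge us (sorted_list_of_set S) \<noteq> 0" by (auto simp: psi_def split: if_splits)
  from wedge_nz[OF w] show "card S = k" using k by simp
next
  show "psi (wedge us) \<in> Vn n" unfolding Vn_def
  proof (intro CollectI allI impI subsetI)
    fix S t assume nz: "psi (wedge us) S \<noteq> 0" and t: "t \<in> S"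
    let ?J = "sorted_list_of_set S"
    let ?k = "length us"
    have fin: "finite S" and w: "wedge us ?J \<noteq> 0" using nz by (auto simp: psi_def split: if_splits)
    have lJ: "length ?J = ?k" using wedge_nz[OF w] by simp
    have "(\<Sum>p\<in>{p. p permutes {..<?k}}. of_int (sign p) * (\<Prod>a<?k. (us ! a) {?J ! p a})) \<noteq> (0::K)"
      using w lJ by (simp add: wedge_def)
    then obtain p where p: "p permutes {..<?k}" and pr: "(\<Prod>a<?k. (us ! a) {?J ! p a}) \<noteq> 0"
      by (metis (no_types, lifting) mem_Collect_eq mult_zero_right sum.neutral)
    obtain b where b: "b < length ?J" "?J ! b = t" using t fin by (metis in_set_conv_nth set_sorted_list_of_set)
    have "b \<in> p ` {..<?k}" using permutes_image[OF p] b lJ by simp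
    then obtain a where a: "a < ?k" "p a = b" by auto
    have "(us ! a) {?J ! p a} \<noteq> 0" using pr a by auto
    moreover have "us ! a \<in> H n 1" using us a nth_mem by blast
    hence "us ! a \<in> Vn n" by (simp add: H_iff)
    ultimately have "{?J ! p a} \<subseteq> {1..n}" unfolding Vn_def by blast
    then show "t \<in> {1..n}" using a b by simp
  qed
qed

lemma psi_ext_H:
  assumes x: "x \<in> ext_pow k (H n 1)"
  shows "psi x \<in> H n k"
  using x unfolding ext_pow_def
proof (induction rule: M.span_induct_alt)
  case base
  then show ?case using H_zero psi_zero by metis
next
  case (step c x y)
  then obtain us where "x = wedge us" "length us = k" "set us \<subseteq> H n 1" by auto
  then have "psi x \<in> H n k" using psi_wedge_H by blast
  moreover have "psi (scl c x + y) = scl c (psi x) + psi y" by (simp only: psi_add psi_scl)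
  ultimately show ?case using step H_add H_scl by metis
qed

definition fv :: "nat \<Rightarrow> nat \<Rightarrow> tvec" where
  "fv n i = (\<lambda>T. w i T - inverse q ^ (n - i) * w n T)"

lemma fv_single: "fv n i {t} = (if t = i then 1 else 0) - (if t = n then inverse q ^ (n - i) else 0)"
  by (simp add: fv_def w_def bv_def)

lemma fv_nz: "fv n i S \<noteq> 0 \<Longrightarrow> S = {i} \<or> S = {n}"
  by (auto simp: fv_def w_def bv_def split: if_splits)

lemma fv_H:
  assumes i: "1 \<le> i" "i \<le> n"
  shows "fv n i \<in> H n 1"
  unfolding H_iff
proof (intro conjI allI impI)
  show "fv n i \<in> Vn n" unfolding Vn_def
  proof (intro CollectI allI impI)
    fix S assume "fv n i S \<noteq> 0"
    then have "S = {i} \<or> S = {n}" by (rule fv_nz)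
    then show "S \<subseteq> {1..n}" using i by auto
  qed
next
  fix T assume "fv n i T \<noteq> 0"
  then have "T = {i} \<or> T = {n}" by (rule fv_nz)
  then show "card T = 1" by auto
next
  show "E_op n (fv n i) = 0"
  proof
    fix T
    show "E_op n (fv n i) T = 0 T"
    proof (cases "T = {}")
      case True
      have "E_op n (fv n i) T = (\<Sum>j\<in>{1..n}. inverse q ^ (n - j) * fv n i {j})"
        using True by (simp add: E_op_def)
      also have "\<dots> = (\<Sum>j\<in>{1..n}. (if j = i then inverse q ^ (n - i) else 0)
            - (if j = n then inverse q ^ (n - i) else 0))"
      proof (rule sum.cong[OF refl])
        fix j
        show "inverse q ^ (n - j) * fv n i {j} = (if j = i then inverse q ^ (n - i) else 0)
            - (if j = n then inverse q ^ (n - i) else 0)"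
          by (cases "j = i"; cases "j = n") (simp_all add: fv_single)
      qed
      also have "\<dots> = inverse q ^ (n - i) - inverse q ^ (n - i)"
        using i by (simp add: sum_subtractf)
      finally show ?thesis by simp
    next
      case False
      have "fv n i (insert j T) = 0" if j: "j \<notin> T" for j
      proof (rule ccontr)
        assume "fv n i (insert j T) \<noteq> 0"
        then obtain x where eq: "insert j T = {x}" using fv_nz by blast
        then have "T \<subseteq> {x}" "j = x" by auto
        moreover obtain t where "t \<in> T" using False by auto
        ultimately show False using j by auto
      qed
      then show ?thesis by (simp add: E_op_def)
    qed
  qed
qed

lemma sorted_list_set_eq:
  assumes "finite I" "finite J" "sorted_list_of_set I = sorted_list_of_set J"
  shows "I = J"
  using assms by (metis set_sorted_list_of_set)

lemma wedge_fv:
  assumes n: "2 \<le> n" and I: "I \<subseteq> {1..n-1}" and J: "J \<subseteq> {1..n-1}" and c: "card J = card I"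
  shows "psi (wedge (map (fv n) (sorted_list_of_set I))) J = (if J = I then 1 else 0)"
proof -
  have fI: "finite I" and fJ: "finite J" using I J finite_subset by auto
  let ?is = "sorted_list_of_set I"
  let ?J = "sorted_list_of_set J"
  let ?us = "map (fv n) ?is"
  have "psi (wedge ?us) J = wedge ?us ?J" using fJ by (simp add: psi_def)
  also have "\<dots> = (\<Prod>a<length ?us. (?us ! a) {?J ! a})"
  proof (rule wedge_diag)
    show "sorted_wrt (<) ?is" "sorted_wrt (<) ?J" by (simp_all add: strict_sorted_list_of_set)
    show "length ?is = length ?us" by simp
    show "length ?J = length ?us" using c by simp
    fix a b assume a: "a < length ?us" and b: "b < length ?us" and nz: "(?us ! a) {?J ! b} \<noteq> 0"
    have "?J ! b \<in> J" using b c fJ by (metis length_map length_sorted_list_of_set nth_mem set_sorted_list_of_set)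
    hence "?J ! b \<noteq> n" using J n by auto
    hence "?J ! b = ?is ! a" using nz a by (simp add: fv_single split: if_splits)
    then show "?is ! a \<le> ?J ! b \<and> ?J ! b \<le> ?is ! a + 1" by simp
  qed
  also have "\<dots> = (\<Prod>a<length ?is. if ?J ! a = ?is ! a then 1 else 0)"
    unfolding length_map
  proof (rule prod.cong[OF refl])
    fix a assume a: "a \<in> {..<length ?is}"
    have "?J ! a \<in> J" using a c fJ by (metis lessThan_iff length_map length_sorted_list_of_set nth_mem set_sorted_list_of_set)
    hence "?J ! a \<noteq> n" using J n by auto
    then show "(?us ! a) {?J ! a} = (if ?J ! a = ?is ! a then 1 else 0)" using a by (simp add: fv_single)
  qed
  also have "\<dots> = (if J = I then 1 else 0)"
  proof (cases "J = I")
    case True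
    then show ?thesis by simp
  next
    case False
    have "?J \<noteq> ?is" using False sorted_list_set_eq[OF fI fJ] by metis
    moreover have "length ?J = length ?is" using c by simp
    ultimately obtain a where "a < length ?is" "?J ! a \<noteq> ?is ! a" using nth_equalityI by metis
    then show ?thesis using False by (auto intro!: prod_zero)
  qed
  finally show ?thesis .
qed


lemma H_sub_image:
  assumes n: "2 \<le> n" and v: "v \<in> H n k"
  shows "v \<in> psi ` ext_pow k (H n 1)"
proof -
  define II where "II = {I. I \<subseteq> {1..n-1} \<and> card I = k}"
  have finII: "finite II" unfolding II_def by (rule finite_subset[of _ "Pow {1..n-1}"]) auto
  define x where "x = (\<Sum>I\<in>II. scl (v I) (wedge (map (fv n) (sorted_list_of_set I))))"
  have gen: "wedge (map (fv n) (sorted_list_of_set I)) \<in> ext_pow k (H n 1)" if "I \<in> II" for I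
  proof -
    have "set (map (fv n) (sorted_list_of_set I)) \<subseteq> H n 1"
    proof
      fix u assume "u \<in> set (map (fv n) (sorted_list_of_set I))"
      moreover have fI: "finite I" using that finite_subset[of I "{1..n-1}"] by (auto simp: II_def)
      ultimately obtain i where iI: "i \<in> I" and ui: "u = fv n i" by auto
      have "i \<in> {1..n-1}" using iI that by (auto simp: II_def)
      hence "1 \<le> i" "i \<le> n" by auto
      thus "u \<in> H n 1" using fv_H ui by simp
    qed
    moreover have "length (map (fv n) (sorted_list_of_set I)) = k" using that by (simp add: II_def)
    ultimately show ?thesis unfolding ext_pow_def by (intro M.span_base) blast
  qed
  have xin: "x \<in> ext_pow k (H n 1)" unfolding x_def ext_pow_def
    using gen unfolding ext_pow_def by (intro M.span_sum M.span_scale) blast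
  have px: "psi x \<in> H n k" by (rule psi_ext_H[OF xin])
  define d where "d = v - psi x"
  have dH: "d \<in> H n k" unfolding d_def by (rule H_diff[OF v px])
  have pxJ: "psi x J = v J" if J: "J \<in> II" for J
  proof -
    have "psi x J = (\<Sum>I\<in>II. v I * psi (wedge (map (fv n) (sorted_list_of_set I))) J)"
      unfolding x_def psi_sum psi_scl sum_fun_app by (simp add: scl_def)
    also have "\<dots> = (\<Sum>I\<in>II. if I = J then v J else 0)"
      by (rule sum.cong[OF refl]) (use J n in \<open>auto simp: II_def wedge_fv\<close>)
    also have "\<dots> = v J" using J finII by simp
    finally show ?thesis .
  qed
  have d0: "d S = 0" for S
  proof (rule ccontr)
    assume nz: "d S \<noteq> 0"
    have Sn: "S \<subseteq> {1..n}" and cS: "card S = k" using dH nz unfolding H_iff Vn_def by auto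
    show False
    proof (cases "n \<in> S")
      case False
      have "S \<subseteq> {1..n-1}"
      proof
        fix x assume x: "x \<in> S"
        then have "x \<in> {1..n}" using Sn by blast
        moreover have "x \<noteq> n" using x False by blast
        ultimately show "x \<in> {1..n-1}" by auto
      qed
      hence "S \<in> II" using cS by (auto simp: II_def)
      hence "d S = 0" using pxJ by (simp add: d_def)
      with nz show False by simp
    next
      case True
      define T where "T = S - {n}"
      have fS: "finite S" using Sn finite_subset by auto
      have ST: "S = insert n T" and nT: "n \<notin> T" using True by (auto simp: T_def)
      have T1: "T \<subseteq> {1..n-1}" using Sn by (auto simp: T_def)
      have "card S > 0" using fS True by (auto simp: card_gt_0_iff)
      hence cT: "card T + 1 = k" using cS fS True by (simp add: T_def)
      have "E_op n d T = 0" using dH by (simp add: H_iff)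
      hence "(\<Sum>j\<in>{1..n} - T. (-1) ^ card {i\<in>T. i < j} * inverse q ^ (n - j) * d (insert j T)) = 0"
        by (simp add: E_op_def fun_eq_iff)
      moreover have "(\<Sum>j\<in>{1..n} - T. (-1) ^ card {i\<in>T. i < j} * inverse q ^ (n - j) * d (insert j T))
          = (-1) ^ card {i\<in>T. i < n} * inverse q ^ (n - n) * d (insert n T)"
      proof (rule sum_single)
        show "n \<in> {1..n} - T" using n nT by auto
        fix j assume j: "j \<in> {1..n} - T" "j \<noteq> n"
        have "insert j T \<in> II" unfolding II_def using j T1 cT fS
          by (auto simp: T_def card_insert_if)
        then show "(-1) ^ card {i\<in>T. i < j} * inverse q ^ (n - j) * d (insert j T) = 0"
          using pxJ by (simp add: d_def)
      qed simp
      ultimately have "d S = 0" using ST by simp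
      with nz show False by simp
    qed
  qed
  have "v = psi x" using d0 unfolding d_def by (simp add: fun_eq_iff)
  then show ?thesis using xin by blast
qed



section \<open>Explicit wedges of the e_i\<close>

definition cc :: "nat \<Rightarrow> nat \<Rightarrow> K" where "cc i t = e i {t}"

lemma cc_simp: "cc i t = (if t = i then -1 else 0) + (if t = i + 1 then inverse q else 0)"
  by (simp add: cc_def e_def w_def bv_def)

lemma cc_nz: "cc i t \<noteq> 0 \<Longrightarrow> i \<le> t \<and> t \<le> i + 1"
  by (auto simp: cc_simp split: if_splits)

lemma cc_shift: "cc (i + m) (t + m) = cc i t"
  by (simp add: cc_simp)

lemma cc_diag: "cc i i = -1"
  by (simp add: cc_simp)

lemma cc_suc: "cc i (Suc i) = inverse q"
  by (simp add: cc_simp)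

fun cp :: "nat list \<Rightarrow> nat list \<Rightarrow> K" where
  "cp [] [] = 1"
| "cp (i # xs) (t # ts) = cc i t * cp xs ts"
| "cp _ _ = 0"

lemma cp_len: "length xs \<noteq> length ts \<Longrightarrow> cp xs ts = 0"
  by (induction xs ts rule: cp.induct) auto

lemma cp_prod: "length xs = length ts \<Longrightarrow> cp xs ts = (\<Prod>a<length xs. cc (xs ! a) (ts ! a))"
proof (induction xs arbitrary: ts)
  case Nil then show ?case by simp
next
  case (Cons i xs ts)
  then obtain t ts' where ts: "ts = t # ts'" by (cases ts) auto
  show ?case using Cons ts by (simp del: prod.lessThan_Suc add: prod.lessThan_Suc_shift)
qed

lemma cp_nz: "cp xs ts \<noteq> 0 \<Longrightarrow> length xs = length ts \<and> (\<forall>a<length xs. xs ! a \<le> ts ! a \<and> ts ! a \<le> xs ! a + 1)"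
proof (induction xs ts rule: cp.induct)
  case (2 i xs t ts)
  then have "cc i t \<noteq> 0" "cp xs ts \<noteq> 0" by auto
  then show ?case using 2 cc_nz[of i t] by (auto simp: nth_Cons' less_Suc_eq_0_disj)
qed auto

lemma cp_diag: "cp xs xs = (-1) ^ length xs"
  by (induction xs) (auto simp: cc_diag)

lemma cp_suc: "cp xs (map Suc xs) = inverse q ^ length xs"
  by (induction xs) (auto simp: cc_suc)

lemma cp_shift: "cp (map (\<lambda>i. i + m) xs) (map (\<lambda>i. i + m) ys) = cp xs ys"
  by (induction xs ys rule: cp.induct) (auto simp: cc_shift)

lemma cp_append_len: "length a1 = length b1 \<Longrightarrow> cp (a1 @ a2) (b1 @ b2) = cp a1 b1 * cp a2 b2"
  by (induction a1 b1 rule: list_induct2) auto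

lemma cp_append:
  assumes "\<forall>x\<in>set a1. x < m" "\<forall>x\<in>set a2. m < x" "\<forall>y\<in>set b1. y \<le> m" "\<forall>y\<in>set b2. m < y"
  shows "cp (a1 @ a2) (b1 @ b2) = cp a1 b1 * cp a2 b2"
  using assms
proof (induction a1 arbitrary: b1)
  case Nil
  show ?case
  proof (cases b1)
    case Nil then show ?thesis by simp
  next
    case (Cons y b1')
    show ?thesis
    proof (cases a2)
      case Nil then show ?thesis using Cons by simp
    next
      case (Cons x a2')
      have "m < x" "y \<le> m" using Nil.prems Cons \<open>b1 = y # b1'\<close> by auto
      hence "cc x y = 0" using cc_nz[of x y] by fastforce
      then show ?thesis using Cons \<open>b1 = y # b1'\<close> by simp
    qed
  qed
next
  case (Cons x a1')
  show ?case
  proof (cases b1)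
    case Nil
    show ?thesis
    proof (cases b2)
      case Nil then show ?thesis using \<open>b1 = []\<close> by simp
    next
      case (Cons y b2')
      have "x < m" "m < y" using Cons.prems Cons \<open>b1 = []\<close> by auto
      hence "cc x y = 0" using cc_nz[of x y] by fastforce
      then show ?thesis using Cons \<open>b1 = []\<close> by simp
    qed
  next
    case (Cons y b1')
    then show ?thesis using Cons.IH[of b1'] Cons.prems by simp
  qed
qed

lemma wedge_e:
  assumes s: "sorted_wrt (<) xs"
  shows "wedge (map e xs) J = (if sorted_wrt (<) J then cp xs J else 0)"
proof (cases "sorted_wrt (<) J \<and> length J = length xs")
  case True
  have "wedge (map e xs) J = (\<Prod>a<length (map e xs). (map e xs ! a) {J ! a})"
  proof (rule wedge_diag[OF s])
    show "sorted_wrt (<) J" using True by simp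
    show "length xs = length (map e xs)" "length J = length (map e xs)" using True by simp_all
    fix a b assume a: "a < length (map e xs)" and "b < length (map e xs)" and nz: "(map e xs ! a) {J ! b} \<noteq> 0"
    then have "cc (xs ! a) (J ! b) \<noteq> 0" by (simp add: cc_def)
    then show "xs ! a \<le> J ! b \<and> J ! b \<le> xs ! a + 1" by (rule cc_nz)
  qed
  also have "\<dots> = cp xs J" using True by (simp add: cp_prod cc_def)
  finally show ?thesis using True by simp
next
  case False
  then show ?thesis
  proof (cases "sorted_wrt (<) J")
    case True
    then have "length J \<noteq> length xs" using False by simp
    then show ?thesis using True by (simp add: wedge_def cp_len)
  qed (simp add: wedge_def)
qed

definition Gf :: "nat set \<Rightarrow> tvec" where
  "Gf I = (\<lambda>S. if finite S then cp (sorted_list_of_set I) (sorted_list_of_set S) else 0)"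

lemma psi_wedge_e: "psi (wedge (map e (sorted_list_of_set I))) = Gf I"
  by (simp add: fun_eq_iff psi_def Gf_def wedge_e strict_sorted_list_of_set)

lemma wedge_e_set: "wedge (map e (sorted_list_of_set I)) (sorted_list_of_set J) = cp (sorted_list_of_set I) (sorted_list_of_set J)"
  by (simp add: wedge_e strict_sorted_list_of_set)

section \<open>Injectivity and independence\<close>

lemma sum_list_le: "length xs = length ys \<Longrightarrow> (\<forall>a<length xs. (xs ! a :: nat) \<le> ys ! a) \<Longrightarrow> sum_list xs \<le> sum_list ys"
proof (induction xs ys rule: list_induct2)
  case (Cons x xs y ys)
  have "x \<le> y" using Cons.prems by force
  moreover have "sum_list xs \<le> sum_list ys" using Cons by force
  ultimately show ?case by simp
qed simp

lemma sum_list_eq: "length xs = length ys \<Longrightarrow> (\<forall>a<length xs. (xs ! a :: nat) \<le> ys ! a) \<Longrightarrow> sum_list ys \<le> sum_list xs \<Longrightarrow> xs = ys"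
proof (induction xs ys rule: list_induct2)
  case (Cons x xs y ys)
  have xy: "x \<le> y" using Cons.prems by force
  have al: "\<forall>a<length xs. xs ! a \<le> ys ! a" using Cons.prems by force
  have "sum_list xs \<le> sum_list ys" using sum_list_le[OF Cons.hyps(1) al] .
  then have "x = y" "sum_list ys \<le> sum_list xs" using xy Cons.prems by auto
  then show ?case using Cons.IH al by simp
qed simp

lemma sorted_le_eq:
  assumes "finite I" "finite J"
    and "cp (sorted_list_of_set I) (sorted_list_of_set J) \<noteq> 0"
    and "cp (sorted_list_of_set J) (sorted_list_of_set I) \<noteq> 0"
  shows "I = J"
proof -
  let ?i = "sorted_list_of_set I" and ?j = "sorted_list_of_set J"
  from cp_nz[OF assms(3)] have l: "length ?i = length ?j" and a: "\<forall>a<length ?i. ?i ! a \<le> ?j ! a" by auto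
  from cp_nz[OF assms(4)] have b: "\<forall>a<length ?j. ?j ! a \<le> ?i ! a" by auto
  have "?i = ?j"
  proof (rule nth_equalityI[OF l])
    fix a assume "a < length ?i"
    then show "?i ! a = ?j ! a" using a b l by (simp add: le_antisym)
  qed
  then show ?thesis using assms(1,2) by (metis set_sorted_list_of_set)
qed

lemma e_inj:
  "inj_on (\<lambda>I. wedge (map e (sorted_list_of_set I))) {I. I \<subseteq> {1..n-1} \<and> card I = k}"
proof (rule inj_onI)
  fix I J assume I: "I \<in> {I. I \<subseteq> {1..n-1} \<and> card I = k}" and J: "J \<in> {I. I \<subseteq> {1..n-1} \<and> card I = k}"
    and eq: "wedge (map e (sorted_list_of_set I)) = wedge (map e (sorted_list_of_set J))"
  have fI: "finite I" and fJ: "finite J" using I J finite_subset by auto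
  have "cp (sorted_list_of_set J) (sorted_list_of_set I) = cp (sorted_list_of_set I) (sorted_list_of_set I)"
    using fun_cong[OF eq, of "sorted_list_of_set I"] by (simp add: wedge_e_set)
  moreover have "cp (sorted_list_of_set I) (sorted_list_of_set J) = cp (sorted_list_of_set J) (sorted_list_of_set J)"
    using fun_cong[OF eq, of "sorted_list_of_set J"] by (simp add: wedge_e_set)
  ultimately show "I = J" using sorted_le_eq[OF fJ fI] by (simp add: cp_diag)
qed

lemma sum_sorted: "finite I \<Longrightarrow> sum_list (sorted_list_of_set I) = \<Sum>I"
proof -
  assume f: "finite I"
  have "sum_list (map (\<lambda>x. x) (sorted_list_of_set I)) = sum (\<lambda>x. x) (set (sorted_list_of_set I))"
    by (rule sum_list_distinct_conv_sum_set) simp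
  then show ?thesis using f by simp
qed

lemma e_indep:
  "\<not> kdependent ((\<lambda>I. wedge (map e (sorted_list_of_set I))) ` {I. I \<subseteq> {1..n-1} \<and> card I = k})"
proof
  let ?W = "\<lambda>I. wedge (map e (sorted_list_of_set I))"
  let ?II = "{I. I \<subseteq> {1..n-1} \<and> card I = k}"
  assume "kdependent (?W ` ?II)"
  then have "\<exists>t u. finite t \<and> t \<subseteq> ?W ` ?II \<and> (\<Sum>v\<in>t. scl (u v) v) = 0 \<and> (\<exists>v\<in>t. u v \<noteq> 0)"
    by (simp only: M.dependent_explicit)
  then obtain t u where t: "finite t" "t \<subseteq> ?W ` ?II" and s0: "(\<Sum>v\<in>t. scl (u v) v) = 0"
    and ex: "\<exists>v\<in>t. u v \<noteq> 0" by blast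
  define P where "P = (\<lambda>I. I \<in> ?II \<and> ?W I \<in> t \<and> u (?W I) \<noteq> 0)"
  obtain v0 where v0: "v0 \<in> t" "u v0 \<noteq> 0" using ex by blast
  from subsetD[OF t(2) v0(1)] obtain I0 where "I0 \<in> ?II" "v0 = ?W I0" by (rule imageE)
  then have "P I0" using v0 unfolding P_def by blast
  then obtain I where PI: "P I" and min: "\<And>J. P J \<Longrightarrow> \<Sum>I \<le> \<Sum>J"
    using ex_has_least_nat[of P I0 "\<lambda>I. \<Sum>I"] by blast
  have fin: "finite J" if "J \<in> ?II" for J
  proof -
    have "J \<subseteq> {1..n-1}" using that by simp
    then show ?thesis by (rule finite_subset) simp
  qed
  have "I \<in> ?II" using PI unfolding P_def by blast
  then have fI: "finite I" by (rule fin)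
  let ?j = "sorted_list_of_set I"
  have "(\<Sum>v\<in>t. scl (u v) v) ?j = 0" using s0 by simp
  hence sum0: "(\<Sum>v\<in>t. u v * v ?j) = 0" by (simp add: sum_fun_app scl_def)
  have "(\<Sum>v\<in>t. u v * v ?j) = u (?W I) * ?W I ?j"
  proof (rule sum_single[OF t(1)])
    show "?W I \<in> t" using PI unfolding P_def by blast
    fix v assume v: "v \<in> t" "v \<noteq> ?W I"
    from subsetD[OF t(2) v(1)] obtain J where J: "J \<in> ?II" "v = ?W J" by (rule imageE)
    show "u v * v ?j = 0"
    proof (rule ccontr)
      assume nz: "u v * v ?j \<noteq> 0"
      then have "u v \<noteq> 0" by auto
      then have "u (?W J) \<noteq> 0" using J(2) by simp
      moreover have "?W J \<in> t" using J(2) v(1) by simp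
      ultimately have "P J" unfolding P_def using J(1) by blast
      then have le: "\<Sum>I \<le> \<Sum>J" by (rule min)
      have cpnz: "cp (sorted_list_of_set J) ?j \<noteq> 0" using nz J by (simp add: wedge_e_set)
      from cp_nz[OF this] have l: "length (sorted_list_of_set J) = length ?j"
        and c: "\<forall>a<length (sorted_list_of_set J). sorted_list_of_set J ! a \<le> ?j ! a" by auto
      have "sum_list ?j \<le> sum_list (sorted_list_of_set J)" using le fI fin[OF J(1)] by (simp add: sum_sorted)
      from sum_list_eq[OF l c this] have "sorted_list_of_set J = ?j" .
      then have "J = I" using fI fin[OF J(1)] by (metis set_sorted_list_of_set)
      then show False using v J by simp
    qed
  qed
  also have "?W I ?j = (-1) ^ length ?j" by (simp add: wedge_e_set cp_diag)
  finally have "u (?W I) * (-1) ^ length ?j = 0" using sum0 by simp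
  moreover have "u (?W I) \<noteq> 0" using PI unfolding P_def by blast
  ultimately show False by simp
qed



section \<open>Tensor decomposition of Gf\<close>

lemma sorted_union:
  fixes A B :: "nat set"
  assumes A: "finite A" and B: "finite B" and lt: "\<forall>x\<in>A. \<forall>y\<in>B. x < y"
  shows "sorted_list_of_set (A \<union> B) = sorted_list_of_set A @ sorted_list_of_set B"
proof -
  let ?L = "sorted_list_of_set A @ sorted_list_of_set B"
  have "sorted_wrt (<) ?L" using A B lt by (simp add: sorted_wrt_append strict_sorted_list_of_set)
  moreover have "set ?L = A \<union> B" using A B by simp
  ultimately show ?thesis using sorted_list_of_set_strict by metis
qed

lemma sorted_shift:
  fixes A :: "nat set"
  assumes A: "finite A"
  shows "sorted_list_of_set ((\<lambda>i. i + m) ` A) = map (\<lambda>i. i + m) (sorted_list_of_set A)"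
proof -
  let ?L = "map (\<lambda>i. i + m) (sorted_list_of_set A)"
  have s: "sorted_wrt (<) (sorted_list_of_set A)" by (rule strict_sorted_list_of_set)
  have "sorted_wrt (<) ?L" using s by (simp add: sorted_wrt_map sorted_wrt_mono_rel[of _ "(<)"])
  moreover have "set ?L = (\<lambda>i. i + m) ` A" using A by simp
  ultimately show ?thesis using sorted_list_of_set_strict by metis
qed

lemma Gf_split:
  assumes I1: "finite I1" and I2: "finite I2" and l1: "\<forall>x\<in>I1. x < m" and l2: "\<forall>x\<in>I2. m < x"
  shows "Gf (I1 \<union> I2) S = Gf I1 {i\<in>S. i \<le> m} * Gf I2 {i\<in>S. m < i}"
proof (cases "finite S")
  case False
  have "S = {i\<in>S. i \<le> m} \<union> {i\<in>S. m < i}" by auto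
  then have "\<not> finite {i\<in>S. i \<le> m} \<or> \<not> finite {i\<in>S. m < i}" using False by (metis finite_UnI)
  then show ?thesis using False by (auto simp: Gf_def)
next
  case True
  let ?S1 = "{i\<in>S. i \<le> m}" and ?S2 = "{i\<in>S. m < i}"
  have f1: "finite ?S1" and f2: "finite ?S2" using True by auto
  have "S = ?S1 \<union> ?S2" by auto
  then have sS: "sorted_list_of_set S = sorted_list_of_set ?S1 @ sorted_list_of_set ?S2"
    using sorted_union[OF f1 f2] by auto
  have sI: "sorted_list_of_set (I1 \<union> I2) = sorted_list_of_set I1 @ sorted_list_of_set I2"
    using sorted_union[OF I1 I2] l1 l2 by force
  have "cp (sorted_list_of_set (I1 \<union> I2)) (sorted_list_of_set S) =
      cp (sorted_list_of_set I1) (sorted_list_of_set ?S1) * cp (sorted_list_of_set I2) (sorted_list_of_set ?S2)"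
    unfolding sI sS by (rule cp_append[where m = m]) (use I1 I2 f1 f2 l1 l2 in auto)
  then show ?thesis using True f1 f2 by (simp add: Gf_def)
qed

lemma Gf_shift:
  assumes I: "finite I" and S: "\<forall>x\<in>S. m < x"
  shows "Gf ((\<lambda>i. i + m) ` I) S = Gf I ((\<lambda>i. i - m) ` S)"
proof -
  let ?S' = "(\<lambda>i. i - m) ` S"
  have SS: "S = (\<lambda>i. i + m) ` ?S'"
  proof
    show "S \<subseteq> (\<lambda>i. i + m) ` ?S'"
    proof
      fix x assume "x \<in> S"
      then have "x = (x - m) + m" "x - m \<in> ?S'" using S by auto
      then show "x \<in> (\<lambda>i. i + m) ` ?S'" by blast
    qed
    show "(\<lambda>i. i + m) ` ?S' \<subseteq> S" using S by auto
  qed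
  show ?thesis
  proof (cases "finite S")
    case False
    then have "\<not> finite ?S'" using SS by (metis finite_imageI)
    then show ?thesis using False by (simp add: Gf_def)
  next
    case True
    then have f': "finite ?S'" by simp
    have "sorted_list_of_set S = map (\<lambda>i. i + m) (sorted_list_of_set ?S')"
      by (subst SS) (rule sorted_shift[OF f'])
    then show ?thesis using True f' by (simp add: Gf_def sorted_shift[OF I] cp_shift)
  qed
qed

lemma Gf_empty: "Gf {} = bv {}"
proof
  fix S
  show "Gf {} S = bv {} S"
  proof (cases "finite S")
    case True
    then show ?thesis
      by (cases "sorted_list_of_set S") (auto simp: Gf_def bv_def sorted_list_of_set_eq_Nil_iff)
  qed (auto simp: Gf_def bv_def)
qed

lemma E_block_val:
  assumes j: "j \<in> {1..b}"
  shows "E_op b (bv {1..b}) ({1..b} - {j}) = (-1) ^ (j - 1) * inverse q ^ (b - j)"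
proof -
  let ?S = "{1..b} - {j}"
  have d: "{1..b} - ?S = {j}" using j by blast
  have ins: "insert j ?S = {1..b}" using j by blast
  have c: "{i\<in>?S. i < j} = {1..<j}" using j by auto
  have "E_op b (bv {1..b}) ?S = (\<Sum>j'\<in>{j}. (-1) ^ card {i\<in>?S. i < j'} * inverse q ^ (b - j') * bv {1..b} (insert j' ?S))"
    unfolding E_op_def d ..
  also have "\<dots> = (-1) ^ card {i\<in>?S. i < j} * inverse q ^ (b - j) * bv {1..b} (insert j ?S)"
    by simp
  also have "\<dots> = (-1) ^ (j - 1) * inverse q ^ (b - j)" unfolding ins c by (simp add: bv_def)
  finally show ?thesis .
qed

lemma E_block_zero:
  assumes "\<not> (\<exists>j\<in>{1..b}. S = {1..b} - {j})"
  shows "E_op b (bv {1..b}) S = 0"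
  unfolding E_op_def
proof (rule sum.neutral, rule ballI)
  fix j assume j: "j \<in> {1..b} - S"
  have "insert j S \<noteq> {1..b}"
  proof
    assume eq: "insert j S = {1..b}"
    have jS: "j \<notin> S" using j by simp
    have "S = insert j S - {j}" using jS by simp
    also have "\<dots> = {1..b} - {j}" using eq by simp
    finally have "S = {1..b} - {j}" .
    moreover have "j \<in> {1..b}" using j by simp
    ultimately show False using assms by blast
  qed
  then show "(-1) ^ card {i\<in>S. i < j} * inverse q ^ (b - j) * bv {1..b} (insert j S) = 0"
    by (simp add: bv_def)
qed

lemma Gf_block:
  assumes b: "1 \<le> b"
  shows "Gf {1..b-1} = E_op b (bv {1..b})"
proof
  fix S
  have sI: "sorted_list_of_set {1..b-1} = [1..<b]"
  proof -
    have "{1..b-1} = {1..<b}" using b by auto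
    then show ?thesis by simp
  qed
  show "Gf {1..b-1} S = E_op b (bv {1..b}) S"
  proof (cases "\<exists>j\<in>{1..b}. S = {1..b} - {j}")
    case True
    then obtain j where j: "j \<in> {1..b}" and S: "S = {1..b} - {j}" by blast
    let ?L = "[1..<j] @ map Suc [j..<b]"
    have "sorted_wrt (<) ?L" by (auto simp: sorted_wrt_append sorted_wrt_map)
    moreover have "set ?L = S"
    proof -
      have "set ?L = {1..<j} \<union> Suc ` {j..<b}" by simp
      also have "\<dots> = {1..b} - {j}"
      proof (intro equalityI subsetI)
        fix x assume "x \<in> {1..<j} \<union> Suc ` {j..<b}"
        then show "x \<in> {1..b} - {j}" using j by auto
      next
        fix x assume x: "x \<in> {1..b} - {j}"
        show "x \<in> {1..<j} \<union> Suc ` {j..<b}"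
        proof (cases "x < j")
          case True then show ?thesis using x by auto
        next
          case False
          then have "x - 1 \<in> {j..<b}" "x = Suc (x - 1)" using x by auto
          then show ?thesis by blast
        qed
      qed
      finally show ?thesis using S by simp
    qed
    ultimately have sS: "sorted_list_of_set S = ?L" using sorted_list_of_set_strict by metis
    have ub: "[1..<b] = [1..<j] @ [j..<b]"
      using upt_add_eq_append[of 1 j "b - j"] j by simp
    have fS: "finite S" using S by simp
    have "Gf {1..b-1} S = cp [1..<b] (sorted_list_of_set S)" using fS by (simp only: Gf_def sI if_True)
    also have "\<dots> = cp ([1..<j] @ [j..<b]) ?L" by (simp only: sS ub)
    also have "\<dots> = cp [1..<j] [1..<j] * cp [j..<b] (map Suc [j..<b])" by (simp add: cp_append_len)
    also have "\<dots> = (-1) ^ (j - 1) * inverse q ^ (b - j)" by (simp add: cp_diag cp_suc)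
    also have "\<dots> = E_op b (bv {1..b}) S" using E_block_val[OF j] S by simp
    finally show ?thesis .
  next
    case False
    have "Gf {1..b-1} S = 0"
    proof (rule ccontr)
      assume nz: "Gf {1..b-1} S \<noteq> 0"
      then have fS: "finite S" by (auto simp: Gf_def split: if_splits)
      let ?s = "sorted_list_of_set S"
      have "cp [1..<b] ?s \<noteq> 0" using nz fS unfolding Gf_def sI by simp
      from cp_nz[OF this] have l: "b - 1 = card S" and c: "\<forall>a<b-1. a + 1 \<le> ?s ! a \<and> ?s ! a \<le> a + 2"
        using fS by auto
      have sub: "S \<subseteq> {1..b}"
      proof
        fix t assume "t \<in> S"
        then obtain a where a: "a < length ?s" "?s ! a = t" using fS by (metis in_set_conv_nth set_sorted_list_of_set)
        then have "a < b - 1" using l fS by simp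
        then show "t \<in> {1..b}" using c a by force
      qed
      have "card ({1..b} - S) = 1" using sub l b by (simp add: card_Diff_subset fS)
      then obtain j where j: "{1..b} - S = {j}" by (rule card_1_singletonE)
      then have "j \<in> {1..b}" by auto
      moreover have "S = {1..b} - {j}" using j sub by auto
      ultimately show False using False by blast
    qed
    then show ?thesis using E_block_zero[OF False] by simp
  qed
qed

lemma tensor_apply: "tensor m x y S = x {i\<in>S. i \<le> m} * y ((\<lambda>i. i - m) ` {i\<in>S. m < i})"
  by (simp add: tensor_def)

lemma Gf_decomp:
  assumes I: "finite I" and pos: "\<forall>x\<in>I. 0 < x" and b: "1 \<le> b"
  shows "Gf ((\<lambda>i. i + a) ` ({1..b-1} \<union> (\<lambda>i. i + b) ` I)) =
    tensor a (bv {}) (tensor b (E_op b (bv {1..b})) (Gf I))"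
proof
  fix S
  let ?I0 = "{1..b-1} \<union> (\<lambda>i. i + b) ` I"
  have fI0: "finite ?I0" using I by simp
  have "Gf ((\<lambda>i. i + a) ` ?I0) S = Gf ({} \<union> (\<lambda>i. i + a) ` ?I0) S" by simp
  also have "\<dots> = Gf {} {i\<in>S. i \<le> a} * Gf ((\<lambda>i. i + a) ` ?I0) {i\<in>S. a < i}"
  proof (rule Gf_split)
    show "\<forall>x\<in>(\<lambda>i. i + a) ` ?I0. a < x" using pos b by force
  qed (use fI0 in auto)
  also have "Gf ((\<lambda>i. i + a) ` ?I0) {i\<in>S. a < i} = Gf ?I0 ((\<lambda>i. i - a) ` {i\<in>S. a < i})"
    by (rule Gf_shift[OF fI0]) auto
  also have "Gf ?I0 ((\<lambda>i. i - a) ` {i\<in>S. a < i}) =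
      tensor b (E_op b (bv {1..b})) (Gf I) ((\<lambda>i. i - a) ` {i\<in>S. a < i})"
    (is "Gf ?I0 ?S' = _")
  proof -
    have "Gf ?I0 ?S' = Gf {1..b-1} {i\<in>?S'. i \<le> b} * Gf ((\<lambda>i. i + b) ` I) {i\<in>?S'. b < i}"
    proof (rule Gf_split)
      show "\<forall>x\<in>(\<lambda>i. i + b) ` I. b < x" using pos by force
    qed (use I in auto)
    also have "Gf ((\<lambda>i. i + b) ` I) {i\<in>?S'. b < i} = Gf I ((\<lambda>i. i - b) ` {i\<in>?S'. b < i})"
      by (rule Gf_shift[OF I]) auto
    finally show ?thesis using Gf_block[OF b] by (simp add: tensor_apply)
  qed
  finally show "Gf ((\<lambda>i. i + a) ` ?I0) S = tensor a (bv {}) (tensor b (E_op b (bv {1..b})) (Gf I)) S"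
    by (simp add: tensor_apply Gf_empty)
qed

lemma decomp_card:
  assumes I: "finite I" and pos: "\<forall>x\<in>I. 0 < x"
  shows "card ((\<lambda>i. i + a) ` ({1..b-1} \<union> (\<lambda>i. i + b) ` I)) = (b - 1) + card I"
proof -
  have "card ((\<lambda>i. i + a) ` ({1..b-1} \<union> (\<lambda>i. i + b) ` I)) = card ({1..b-1} \<union> (\<lambda>i. i + b) ` I)"
    by (rule card_image) (simp add: inj_on_def)
  also have "\<dots> = card {1..b-1} + card ((\<lambda>i. i + b) ` I)"
    by (rule card_Un_disjoint) (use I pos in auto)
  also have "card ((\<lambda>i. i + b) ` I) = card I" by (rule card_image) (simp add: inj_on_def)
  finally show ?thesis by simp
qed

lemma tensor_empty: "tensor a (bv {}) (bv {}) = bv {}"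
proof
  fix S
  show "tensor a (bv {}) (bv {}) S = bv {} S"
  proof (cases "S = {}")
    case True then show ?thesis by (simp add: tensor_def bv_def)
  next
    case False
    then obtain x where x: "x \<in> S" by blast
    have "{i\<in>S. i \<le> a} \<noteq> {} \<or> (\<lambda>i. i - a) ` {i\<in>S. a < i} \<noteq> {}"
    proof (cases "x \<le> a")
      case True
      then have "x \<in> {i\<in>S. i \<le> a}" using x by simp
      then show ?thesis by blast
    next
      case False
      then have "x \<in> {i\<in>S. a < i}" using x by simp
      then show ?thesis by blast
    qed
    then show ?thesis using False by (auto simp: tensor_def bv_def)
  qed
qed



section \<open>Strings\<close>

fun vstr :: "nat list \<Rightarrow> bool" where
  "vstr [] = False"
| "vstr [a] = True"
| "vstr (a # b # r) = (2 \<le> b \<and> vstr r)"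

fun kstr :: "nat list \<Rightarrow> nat" where
  "kstr [] = 0"
| "kstr [a] = 0"
| "kstr (a # b # r) = (b - 1) + kstr r"

lemma odd_all: "(\<forall>i<Suc (Suc n). odd i \<longrightarrow> P i) \<longleftrightarrow> P 1 \<and> (\<forall>i<n. odd i \<longrightarrow> P (Suc (Suc i)))"
proof
  assume h: "\<forall>i<Suc (Suc n). odd i \<longrightarrow> P i"
  show "P 1 \<and> (\<forall>i<n. odd i \<longrightarrow> P (Suc (Suc i)))" using h by auto
next
  assume h: "P 1 \<and> (\<forall>i<n. odd i \<longrightarrow> P (Suc (Suc i)))"
  show "\<forall>i<Suc (Suc n). odd i \<longrightarrow> P i"
  proof (intro allI impI)
    fix i assume i: "i < Suc (Suc n)" "odd i"
    show "P i"
    proof (cases i)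
      case 0 then show ?thesis using i by simp
    next
      case (Suc j)
      show ?thesis
      proof (cases j)
        case 0 then show ?thesis using h Suc by simp
      next
        case (Suc l)
        then show ?thesis using h i \<open>i = Suc j\<close> by simp
      qed
    qed
  qed
qed

lemma vstr_iff: "vstr s \<longleftrightarrow> odd (length s) \<and> (\<forall>i<length s. odd i \<longrightarrow> 2 \<le> s ! i)"
proof (induction s rule: vstr.induct)
  case (3 a b r)
  have "(\<forall>i<length (a # b # r). odd i \<longrightarrow> 2 \<le> (a # b # r) ! i) \<longleftrightarrow>
      2 \<le> b \<and> (\<forall>i<length r. odd i \<longrightarrow> 2 \<le> r ! i)"
    using odd_all[of "length r" "\<lambda>i. 2 \<le> (a # b # r) ! i"] by simp
  then show ?case using 3 by auto
qed auto

lemma kstr_sum: "(\<Sum>i\<in>{i. i < length s \<and> odd i}. s ! i - 1) = kstr s"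
proof (induction s rule: kstr.induct)
  case 1 then show ?case by simp
next
  case (2 a)
  have "{i. i < length [a] \<and> odd i} = {}" by (auto dest: odd_pos)
  then show ?case by simp
next
  case (3 a b r)
  let ?A = "{i. i < length r \<and> odd i}"
  have eq: "{i. i < length (a # b # r) \<and> odd i} = insert 1 ((\<lambda>i. Suc (Suc i)) ` ?A)"
  proof (intro equalityI subsetI)
    fix i assume "i \<in> {i. i < length (a # b # r) \<and> odd i}"
    then have i: "i < Suc (Suc (length r))" "odd i" by auto
    show "i \<in> insert 1 ((\<lambda>i. Suc (Suc i)) ` ?A)"
    proof (cases "i \<le> 1")
      case True then have "i = 1" using i by (cases i) auto
      then show ?thesis by simp
    next
      case False
      then have "i - 2 \<in> ?A" "i = Suc (Suc (i - 2))" using i by auto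
      then show ?thesis by blast
    qed
  next
    fix i assume "i \<in> insert 1 ((\<lambda>i. Suc (Suc i)) ` ?A)"
    then show "i \<in> {i. i < length (a # b # r) \<and> odd i}" by auto
  qed
  have "(\<Sum>i\<in>{i. i < length (a # b # r) \<and> odd i}. (a # b # r) ! i - 1) =
      (b - 1) + (\<Sum>i\<in>(\<lambda>i. Suc (Suc i)) ` ?A. (a # b # r) ! i - 1)"
    unfolding eq by (subst sum.insert) auto
  also have "(\<Sum>i\<in>(\<lambda>i. Suc (Suc i)) ` ?A. (a # b # r) ! i - 1) = (\<Sum>i\<in>?A. r ! i - 1)"
    by (subst sum.reindex) (auto simp: inj_on_def)
  finally show ?case using 3 by simp
qed

lemma S_str_iff: "s \<in> S_str n k \<longleftrightarrow> vstr s \<and> kstr s = k \<and> sum_list s = n"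
  unfolding S_str_def vstr_iff kstr_sum[symmetric] by auto

lemma phi_single: "phi_aux True [a] = bv {}"
  by (simp only: phi_aux.simps) (rule tensor_empty)

lemma str_to_set:
  "vstr s \<Longrightarrow> \<exists>I. finite I \<and> I \<subseteq> {1..sum_list s - 1} \<and> card I = kstr s \<and> Gf I = phi_aux True s"
proof (induction s rule: vstr.induct)
  case (2 a)
  have "Gf {} = phi_aux True [a]" by (simp only: Gf_empty phi_single)
  then show ?case by (intro exI[of _ "{}"]) simp
next
  case (3 a b r)
  then have b: "2 \<le> b" and vr: "vstr r" by auto
  obtain J where J: "finite J" "J \<subseteq> {1..sum_list r - 1}" "card J = kstr r" "Gf J = phi_aux True r"
    using 3 vr by blast
  have pos: "\<forall>x\<in>J. 0 < x" using J(2) by auto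
  let ?I = "(\<lambda>i. i + a) ` ({1..b-1} \<union> (\<lambda>i. i + b) ` J)"
  have "Gf ?I = phi_aux True (a # b # r)"
    using Gf_decomp[OF J(1) pos, of b a] b J(4) by simp
  moreover have "card ?I = kstr (a # b # r)" using decomp_card[OF J(1) pos] J(3) by simp
  moreover have "?I \<subseteq> {1..sum_list (a # b # r) - 1}"
  proof
    fix x assume "x \<in> ?I"
    then obtain y where y: "y \<in> {1..b-1} \<union> (\<lambda>i. i + b) ` J" "x = y + a" by blast
    show "x \<in> {1..sum_list (a # b # r) - 1}"
    proof (cases "y \<in> {1..b-1}")
      case True then show ?thesis using y b by auto
    next
      case False
      then obtain z where z: "z \<in> J" "y = z + b" using y by blast
      then have "z \<in> {1..sum_list r - 1}" using J(2) by blast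
      then show ?thesis using y z by auto
    qed
  qed
  moreover have "finite ?I" using J(1) by simp
  ultimately show ?case by blast
qed simp

lemma set_to_str:
  "finite I \<Longrightarrow> I \<subseteq> {1..m-1} \<Longrightarrow> \<exists>s. vstr s \<and> sum_list s = m \<and> kstr s = card I \<and> phi_aux True s = Gf I"
proof (induction "card I" arbitrary: I m rule: less_induct)
  case less
  show ?case
  proof (cases "I = {}")
    case True
    have "phi_aux True [m] = Gf I" by (simp only: True Gf_empty phi_single)
    then show ?thesis using True by (intro exI[of _ "[m]"]) simp
  next
    case False
    define \<mu> where "\<mu> = Min I"
    have \<mu>I: "\<mu> \<in> I" unfolding \<mu>_def using less.prems(1) False by (rule Min_in)
    have \<mu>le: "\<And>x. x \<in> I \<Longrightarrow> \<mu> \<le> x" unfolding \<mu>_def using less.prems(1) by simp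
    have \<mu>1: "1 \<le> \<mu>" using \<mu>I less.prems(2) by auto
    have ex: "\<exists>r. \<mu> + r \<notin> I"
    proof
      have "Max I < \<mu> + (Max I + 1)" by simp
      then show "\<mu> + (Max I + 1) \<notin> I" using Max_ge[OF less.prems(1)] by (meson leD)
    qed
    define r where "r = (LEAST r. \<mu> + r \<notin> I)"
    have rn: "\<mu> + r \<notin> I" unfolding r_def using ex by (rule LeastI_ex)
    have run: "\<And>r'. r' < r \<Longrightarrow> \<mu> + r' \<in> I" unfolding r_def using not_less_Least by blast
    have r0: "r \<noteq> 0" using rn \<mu>I by (cases r) auto
    define a where "a = \<mu> - 1"
    define b where "b = r + 1"
    have ab: "a + b = \<mu> + r" using \<mu>1 by (simp add: a_def b_def)
    have b2: "2 \<le> b" using r0 by (simp add: b_def)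
    define J where "J = {i\<in>I. a + b < i}"
    define I2 where "I2 = (\<lambda>i. i - (a + b)) ` J"
    have fJ: "finite J" using less.prems(1) by (simp add: J_def)
    have fI2: "finite I2" using fJ by (simp add: I2_def)
    have pos: "\<forall>x\<in>I2. 0 < x" by (auto simp: I2_def J_def)
    have decomp: "I = (\<lambda>i. i + a) ` ({1..b-1} \<union> (\<lambda>i. i + b) ` I2)"
    proof (intro equalityI subsetI)
      fix x assume x: "x \<in> I"
      have xm: "\<mu> \<le> x" using \<mu>le x by simp
      show "x \<in> (\<lambda>i. i + a) ` ({1..b-1} \<union> (\<lambda>i. i + b) ` I2)"
      proof (cases "x < \<mu> + r")
        case True
        then have "x - a \<in> {1..b-1}" using xm \<mu>1 by (auto simp: a_def b_def)
        moreover have "x = (x - a) + a" using xm by (simp add: a_def)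
        ultimately show ?thesis by blast
      next
        case False
        then have "x \<noteq> \<mu> + r" using rn x by blast
        then have gt: "a + b < x" using False ab by simp
        then have "x \<in> J" using x by (simp add: J_def)
        then have "x - (a + b) \<in> I2" by (simp add: I2_def)
        moreover have "x = ((x - (a + b)) + b) + a" using gt by simp
        ultimately show ?thesis by blast
      qed
    next
      fix x assume "x \<in> (\<lambda>i. i + a) ` ({1..b-1} \<union> (\<lambda>i. i + b) ` I2)"
      then obtain y where y: "y \<in> {1..b-1} \<union> (\<lambda>i. i + b) ` I2" "x = y + a" by blast
      show "x \<in> I"
      proof (cases "y \<in> {1..b-1}")
        case True
        then have "y - 1 < r" "x = \<mu> + (y - 1)" using y \<mu>1 by (auto simp: a_def b_def)
        then show ?thesis using run by simp
      next
        case False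
        then obtain z where z: "z \<in> I2" "y = z + b" using y by blast
        then obtain i where i: "i \<in> J" "z = i - (a + b)" by (auto simp: I2_def)
        then have "a + b < i" "i \<in> I" by (auto simp: J_def)
        then show ?thesis using y z i by simp
      qed
    qed
    have cJ: "card J < card I"
    proof (rule psubset_card_mono[OF less.prems(1)])
      have "\<mu> \<notin> J" using ab by (simp add: J_def)
      then show "J \<subset> I" using \<mu>I by (auto simp: J_def)
    qed
    have cI2: "card I2 < card I" using card_image_le[OF fJ, of "\<lambda>i. i - (a + b)"] cJ by (simp add: I2_def)
    have "r - 1 < r" using r0 by simp
    then have "\<mu> + (r - 1) \<in> I" by (rule run)
    then have "\<mu> + (r - 1) \<le> m - 1" using less.prems(2) by auto
    then have abm: "a + b \<le> m" using ab r0 \<mu>1 by simp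
    have sub2: "I2 \<subseteq> {1..(m - (a + b)) - 1}"
    proof
      fix z assume "z \<in> I2"
      then obtain i where i: "i \<in> I" "a + b < i" "z = i - (a + b)" by (auto simp: I2_def J_def)
      then have "i \<le> m - 1" using less.prems(2) by auto
      then show "z \<in> {1..(m - (a + b)) - 1}" using i by auto
    qed
    obtain s2 where s2: "vstr s2" "sum_list s2 = m - (a + b)" "kstr s2 = card I2" "phi_aux True s2 = Gf I2"
      using less.hyps[OF cI2 fI2 sub2] by blast
    have "vstr (a # b # s2)" using s2 b2 by simp
    moreover have "sum_list (a # b # s2) = m" using s2 abm by simp
    moreover have "kstr (a # b # s2) = card I"
      using decomp_card[OF fI2 pos, of a b] s2(3) decomp by simp
    moreover have "phi_aux True (a # b # s2) = Gf I"
      using Gf_decomp[OF fI2 pos, of b a] b2 s2(4) decomp by simp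
    ultimately show ?thesis by blast
  qed
qed

theorem proposition2p7:
  fixes n k :: nat
  assumes "2 \<le> n" and "1 \<le> k" and "k \<le> n - 1"
  shows "psi ` ext_pow k (H n 1) = H n k
    \<and> inj_on psi (ext_pow k (H n 1))
    \<and> inj_on (\<lambda>I. wedge (map e (sorted_list_of_set I))) {I. I \<subseteq> {1..n-1} \<and> card I = k}
         \<and> \<not> kdependent ((\<lambda>I. wedge (map e (sorted_list_of_set I))) ` {I. I \<subseteq> {1..n-1} \<and> card I = k})
    \<and> (\<lambda>I. psi (wedge (map e (sorted_list_of_set I)))) ` {I. I \<subseteq> {1..n-1} \<and> card I = k}
         = phi ` S_str n k"
proof (intro conjI)
  show "psi ` ext_pow k (H n 1) = H n k"
  proof
    show "psi ` ext_pow k (H n 1) \<subseteq> H n k" using psi_ext_H by blast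
    show "H n k \<subseteq> psi ` ext_pow k (H n 1)" using H_sub_image[OF assms(1)] by blast
  qed
  show "inj_on psi (ext_pow k (H n 1))" by (rule psi_inj)
  show "inj_on (\<lambda>I. wedge (map e (sorted_list_of_set I))) {I. I \<subseteq> {1..n-1} \<and> card I = k}"
    by (rule e_inj)
  show "\<not> kdependent ((\<lambda>I. wedge (map e (sorted_list_of_set I))) ` {I. I \<subseteq> {1..n-1} \<and> card I = k})"
    by (rule e_indep)
  show "(\<lambda>I. psi (wedge (map e (sorted_list_of_set I)))) ` {I. I \<subseteq> {1..n-1} \<and> card I = k}
         = phi ` S_str n k"
    unfolding psi_wedge_e
  proof
    show "Gf ` {I. I \<subseteq> {1..n-1} \<and> card I = k} \<subseteq> phi ` S_str n k"
    proof
      fix x assume "x \<in> Gf ` {I. I \<subseteq> {1..n-1} \<and> card I = k}"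
      then obtain I where I: "I \<subseteq> {1..n-1}" "card I = k" "x = Gf I" by blast
      have fI: "finite I" using I(1) finite_subset by blast
      obtain s where s: "vstr s" "sum_list s = n" "kstr s = card I" "phi_aux True s = Gf I"
        using set_to_str[OF fI I(1)] by blast
      have "s \<in> S_str n k" using s I(2) by (simp add: S_str_iff)
      moreover have "phi s = x" using s(4) I(3) by (simp add: phi_def)
      ultimately show "x \<in> phi ` S_str n k" by blast
    qed
    show "phi ` S_str n k \<subseteq> Gf ` {I. I \<subseteq> {1..n-1} \<and> card I = k}"
    proof
      fix x assume "x \<in> phi ` S_str n k"
      then obtain s where s: "s \<in> S_str n k" "x = phi s" by blast
      then have v: "vstr s" "kstr s = k" "sum_list s = n" by (auto simp: S_str_iff)
      obtain I where I: "finite I" "I \<subseteq> {1..sum_list s - 1}" "card I = kstr s" "Gf I = phi_aux True s"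
        using str_to_set[OF v(1)] by blast
      have "I \<in> {I. I \<subseteq> {1..n-1} \<and> card I = k}" using I v by simp
      moreover have "x = Gf I" using I(4) s(2) by (simp add: phi_def)
      ultimately show "x \<in> Gf ` {I. I \<subseteq> {1..n-1} \<and> card I = k}" by blast
    qed
  qed
qed


end
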